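(* Let $X=(x_{ij})$ be an $n\times n$ alternating matrix of indeterminates over $\mathbb{Z}$, with $n\geqslant4$ even. Set $S=\mathbb{Z}[X]$ and $R=S/(\operatorname{pf}X)$. Fix a prime $p>0$ and let $\varphi_p$ be the standard $p$-derivation on $S$ with respect to the indeterminates $x_{ij}$, $i<j$. Then \[ \left[\frac{\varphi_p(\operatorname{pf}X)}{(x_{12}\cdots x_{1n})^p}\right]\in H^{n-1}_{(x_{12},\dots,x_{1n})}(R) \] is a nonzero $p$-torsion element, and its image in $H^{n-1}_{(x_{12},\dots,x_{1n})}(R/pR)$ is nonzero. In particular, $H^{n-1}_{(x_{12},\dots,x_{1n})}(R)$ contains a nonzero $p$-torsion element for each prime $p>0$.
   Context: $\operatorname{pf}X$ is the Pfaffian of $X$. For a polynomial ring $S=\mathbb{Z}[\boldsymbol{x}]$, the standard lift of Frobenius $\Lambda_p$ is the ring endomorphism with $\Lambda_p(x)=x^p$ for each indeterminate $x$, and the standard $p$-derivation is $\varphi_p(s)=(\Lambda_p(s)-s^p)/p$. The local cohomology class is the Čech class of the image of $\varphi_p(\operatorname{pf}X)$ in $R$. *)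

theory Defs
  imports "HOL-Library.Poly_Mapping" "HOL-Computational_Algebra.Primes" "HOL-Combinatorics.Permutations"
begin

text \<open>S = Z[x_ij] : polynomials over int in variables indexed by pairs (i,j) (0-based, i<j).\<close>

type_synonym mono = "(nat \<times> nat) \<Rightarrow>\<^sub>0 nat"
type_synonym zpoly = "mono \<Rightarrow>\<^sub>0 int"

definition Xvar :: "nat \<Rightarrow> nat \<Rightarrow> zpoly" where
  "Xvar i j = Poly_Mapping.single (Poly_Mapping.single (i, j) 1) 1"

text \<open>Pfaffian of the generic n\<times>n alternating matrix (entries x_ij for i<j, -x_ji for i>j),
  indices 0..n-1: sum over permutations with sigma(2k)<sigma(2k+1) and
  sigma(0)<sigma(2)<...<sigma(n-2) of sgn(sigma) * prod_k x_{sigma(2k),sigma(2k+1)}.\<close>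

definition pfaff_perms :: "nat \<Rightarrow> (nat \<Rightarrow> nat) set" where
  "pfaff_perms n = {\<sigma>. \<sigma> permutes {..<n} \<and>
      (\<forall>k < n div 2. \<sigma> (2*k) < \<sigma> (2*k+1)) \<and>
      (\<forall>k. k + 1 < n div 2 \<longrightarrow> \<sigma> (2*k) < \<sigma> (2*k+2))}"

definition pfX :: "nat \<Rightarrow> zpoly" where
  "pfX n = (\<Sum>\<sigma>\<in>pfaff_perms n. of_int (sign \<sigma>) *
              (\<Prod>k<n div 2. Xvar (\<sigma> (2*k)) (\<sigma> (2*k+1))))"

text \<open>Standard lift of Frobenius: the ring endomorphism x \<mapsto> x^p, i.e.
  sum c_m x^m \<mapsto> sum c_m x^(p m).\<close>

definition frob_lift :: "nat \<Rightarrow> zpoly \<Rightarrow> zpoly" where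
  "frob_lift p f = (\<Sum>m\<in>Poly_Mapping.keys f.
      Poly_Mapping.single (Poly_Mapping.map (\<lambda>e. p * e) m) (Poly_Mapping.lookup f m))"

text \<open>Standard p-derivation: (Lambda_p(s) - s^p)/p (exact division, coefficientwise).\<close>

definition p_deriv :: "nat \<Rightarrow> zpoly \<Rightarrow> zpoly" where
  "p_deriv p s = Poly_Mapping.map (\<lambda>c. c div int p) (frob_lift p s - s ^ p)"

definition in_ideal :: "zpoly list \<Rightarrow> zpoly \<Rightarrow> bool" where
  "in_ideal gs f \<longleftrightarrow> (\<exists>c. f = (\<Sum>i<length gs. c i * gs ! i))"

text \<open>Let A = S/(rels). For y = y_1..y_m in S, the Cech class [f/(y_1...y_m)^s] in the top
  Cech cohomology H^m_(y)(A) = A_{y_1...y_m} / sum_i image(A_{y_1..^y_i..y_m}) vanishes iff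
  for some t, (y_1...y_m)^t f lies in (y_1^(s+t),...,y_m^(s+t))A, i.e. in the ideal of S
  generated by rels and the y_i^(s+t).\<close>

definition cech_class_zero :: "zpoly list \<Rightarrow> zpoly list \<Rightarrow> zpoly \<Rightarrow> nat \<Rightarrow> bool" where
  "cech_class_zero rels ys f s \<longleftrightarrow>
     (\<exists>t. in_ideal (rels @ map (\<lambda>y. y ^ (s + t)) ys) (prod_list ys ^ t * f))"

end

theory Submission
  imports Defs
begin

lemma pm_expand: "(F::'a \<Rightarrow>\<^sub>0 'b::comm_monoid_add) = (\<Sum>k\<in>Poly_Mapping.keys F. Poly_Mapping.single k (Poly_Mapping.lookup F k))"
proof (rule poly_mapping_eqI)
  fix m
  show "Poly_Mapping.lookup F m = Poly_Mapping.lookup (\<Sum>k\<in>Poly_Mapping.keys F. Poly_Mapping.single k (Poly_Mapping.lookup F k)) m"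
    by (auto simp add: lookup_sum lookup_single when_def in_keys_iff)
qed

lemma lookup_mult_single_shift:
  fixes F :: "'a::cancel_comm_monoid_add \<Rightarrow>\<^sub>0 'b::comm_semiring_1"
  shows "Poly_Mapping.lookup (F * Poly_Mapping.single a c) (m + a) = Poly_Mapping.lookup F m * c"
proof -
  have "F * Poly_Mapping.single a c = (\<Sum>k\<in>Poly_Mapping.keys F. Poly_Mapping.single (k + a) (Poly_Mapping.lookup F k * c))"
    by (subst pm_expand[of F]) (simp add: sum_distrib_right mult_single)
  then have "Poly_Mapping.lookup (F * Poly_Mapping.single a c) (m + a) = (\<Sum>k\<in>Poly_Mapping.keys F. (Poly_Mapping.lookup F k * c when k + a = m + a))"
    by (simp add: lookup_sum lookup_single)
  also have "\<dots> = (\<Sum>k\<in>Poly_Mapping.keys F. (if k = m then Poly_Mapping.lookup F k * c else 0))"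
    by (rule sum.cong) (auto simp: when_def)
  also have "\<dots> = Poly_Mapping.lookup F m * c"
    by (simp add: in_keys_iff)
  finally show ?thesis .
qed

lemma lookup_mult_single_zero:
  fixes F :: "'a::cancel_comm_monoid_add \<Rightarrow>\<^sub>0 'b::comm_semiring_1"
  assumes "\<And>l. m \<noteq> l + a"
  shows "Poly_Mapping.lookup (F * Poly_Mapping.single a c) m = 0"
proof -
  have "F * Poly_Mapping.single a c = (\<Sum>k\<in>Poly_Mapping.keys F. Poly_Mapping.single (k + a) (Poly_Mapping.lookup F k * c))"
    by (subst pm_expand[of F]) (simp add: sum_distrib_right mult_single)
  then show ?thesis using assms
    apply (auto simp add: lookup_sum lookup_single when_def intro!: sum.neutral)
    by blast
qed

lemma lookup_of_nat_mult:
  "Poly_Mapping.lookup (of_nat p * (G::'a::comm_monoid_add \<Rightarrow>\<^sub>0 int)) m = int p * Poly_Mapping.lookup G m"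
proof -
  have "of_nat p * G = Poly_Mapping.map ((*) (int p)) G"
    by (simp add: mult_map_scale_conv_mult flip: single_of_nat)
  then show ?thesis by (simp add: map.rep_eq when_def)
qed

definition scal :: "nat \<Rightarrow> mono \<Rightarrow> mono" where
  "scal t m = Poly_Mapping.map ((*) t) m"

lemma lookup_scal [simp]: "Poly_Mapping.lookup (scal t m) k = t * Poly_Mapping.lookup m k"
  by (simp add: scal_def map.rep_eq when_def)

lemma single_pow: "(Poly_Mapping.single m (c::int)) ^ t = Poly_Mapping.single (scal t m) (c ^ t)"
proof (induction t)
  case 0
  have "scal 0 m = 0" by (rule poly_mapping_eqI) simp
  then show ?case by simp
next
  case (Suc t)
  have "m + scal t m = scal (Suc t) m" by (rule poly_mapping_eqI) (simp add: lookup_add)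
  then show ?case using Suc by (simp add: mult_single)
qed

lemma binom_frob:
  fixes x y :: "'a::comm_ring_1"
  assumes "prime p"
  shows "\<exists>h. (x + y)^p = x^p + y^p + of_nat p * h"
proof -
  have p: "p \<ge> 2" using prime_ge_2_nat assms by blast
  have set: "{..p} = insert 0 (insert p {1..<p})" using p by auto
  have "(x+y)^p = (\<Sum>k\<le>p. of_nat (p choose k) * x^k * y^(p-k))" by (rule binomial_ring)
  also have "\<dots> = y^p + (x^p + (\<Sum>k\<in>{1..<p}. of_nat (p choose k) * x^k * y^(p-k)))"
    unfolding set using p by (simp add: sum.insert)
  also have "(\<Sum>k\<in>{1..<p}. of_nat (p choose k) * x^k * y^(p-k)) = of_nat p * (\<Sum>k\<in>{1..<p}. of_nat ((p choose k) div p) * x^k * y^(p-k))"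
    unfolding sum_distrib_left
  proof (rule sum.cong)
    fix k assume k: "k \<in> {1..<p}"
    have "p dvd (p choose k)" using dvd_choose_prime[of k p] k assms p by auto
    then have "(p choose k) = p * ((p choose k) div p)" by simp
    then have "(of_nat (p choose k) :: 'a) = of_nat p * of_nat ((p choose k) div p)"
      by (metis of_nat_mult)
    then show "of_nat (p choose k) * x ^ k * y ^ (p - k) = of_nat p * (of_nat ((p choose k) div p) * x ^ k * y ^ (p - k))"
      by (simp add: algebra_simps)
  qed simp
  finally have eq: "(x+y)^p = y^p + (x^p + of_nat p * (\<Sum>k\<in>{1..<p}. of_nat ((p choose k) div p) * x^k * y^(p-k)))" .
  have "(x+y)^p = x^p + y^p + of_nat p * (\<Sum>k\<in>{1..<p}. of_nat ((p choose k) div p) * x^k * y^(p-k))"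
    unfolding eq by (simp only: add_ac)
  then show ?thesis by blast
qed

lemma fermat_int:
  assumes "prime p"
  shows "int p dvd (a::int)^p - a"
proof -
  have nat_case: "int p dvd (int b)^p - int b" for b
  proof (induction b)
    case 0 then show ?case using assms prime_gt_0_nat by (simp add: power_0_left)
  next
    case (Suc b)
    obtain h where h: "(int b + 1)^p = (int b)^p + 1^p + of_nat p * h" using binom_frob[OF assms] by blast
    have e: "(int (Suc b))^p - int (Suc b) = ((int b)^p - int b) + int p * h" using h by (simp add: add.commute)
    show ?case unfolding e using Suc by (intro dvd_add) simp_all
  qed
  show ?thesis
  proof (cases "a \<ge> 0")
    case True
    then show ?thesis using nat_case[of "nat a"] by simp
  next
    case False
    define b where "b = nat (-a)"
    have a: "a = - int b" using False b_def by simp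
    show ?thesis
    proof (cases "odd p")
      case True
      have "a^p - a = - ((int b)^p - int b)" using a True by (simp add: power_minus_odd)
      then show ?thesis using nat_case[of b] by (simp only: dvd_minus_iff)
    next
      case False
      have "\<not> p > 2" using prime_odd_nat[OF assms] False by blast
      then have "p = 2" using prime_ge_2_nat[OF assms] by simp
      then have "a^p - a = ((int b)^p - int b) + int p * int b" using a by (simp add: power2_eq_square)
      then show ?thesis using nat_case[of b] by simp
    qed
  qed
qed

lemma frob_lift_add: "frob_lift p (a + b) = frob_lift p a + frob_lift p b"
  unfolding frob_lift_def
  by (rule setsum_keys_plus_distrib) (simp_all add: single_add)

lemma frob_lift_single: "frob_lift p (Poly_Mapping.single k c) = Poly_Mapping.single (scal p k) c"
  by (cases "c = 0") (simp_all add: frob_lift_def scal_def)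

lemma frob_lift_zero [simp]: "frob_lift p 0 = 0"
  by (simp add: frob_lift_def)

lemma frob_lift_sum: "finite A \<Longrightarrow> frob_lift p (\<Sum>a\<in>A. f a) = (\<Sum>a\<in>A. frob_lift p (f a))"
  by (induction A rule: finite_induct) (simp_all add: frob_lift_add)

lemma of_nat_single_mult: "(of_nat p :: zpoly) * Poly_Mapping.single k c = Poly_Mapping.single k (int p * c)"
  by (simp add: mult_single flip: single_of_nat)

lemma frobenius_cong:
  assumes "prime p"
  shows "\<exists>h. frob_lift p s - s^p = of_nat p * h"
proof -
  have p0: "p > 0" using assms prime_gt_0_nat by blast
  have main: "\<exists>h. frob_lift p (\<Sum>k\<in>K. Poly_Mapping.single k (c k)) - (\<Sum>k\<in>K. Poly_Mapping.single k (c k))^p = of_nat p * h"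
    if "finite K" for K and c :: "mono \<Rightarrow> int"
    using that
  proof (induction K rule: finite_induct)
    case empty
    then show ?case using p0 by (auto simp: power_0_left intro: exI[of _ 0])
  next
    case (insert k0 K)
    define S where "S = (\<Sum>k\<in>K. Poly_Mapping.single k (c k))"
    obtain h2 where h2: "frob_lift p S - S^p = of_nat p * h2" using insert S_def by blast
    obtain h1 where h1: "(Poly_Mapping.single k0 (c k0) + S)^p = (Poly_Mapping.single k0 (c k0))^p + S^p + of_nat p * h1"
      using binom_frob[OF assms] by blast
    obtain d where d: "c k0 - c k0 ^ p = int p * d"
      using fermat_int[OF assms, of "c k0"] by (metis dvd_def minus_diff_eq mult_minus_right)
    have sum: "(\<Sum>k\<in>insert k0 K. Poly_Mapping.single k (c k)) = Poly_Mapping.single k0 (c k0) + S"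
      using insert S_def by simp
    have "frob_lift p (Poly_Mapping.single k0 (c k0) + S) - (Poly_Mapping.single k0 (c k0) + S)^p
       = Poly_Mapping.single (scal p k0) (c k0 - c k0 ^ p) + (frob_lift p S - S^p) - of_nat p * h1"
      by (simp add: frob_lift_add frob_lift_single h1 single_pow single_diff)
    also have "\<dots> = of_nat p * (Poly_Mapping.single (scal p k0) d + h2 - h1)"
      by (simp add: d h2 of_nat_single_mult algebra_simps)
    finally show ?case unfolding sum by blast
  qed
  have e: "(\<Sum>k\<in>Poly_Mapping.keys s. Poly_Mapping.single k (Poly_Mapping.lookup s k)) = s"
    by (rule pm_expand[symmetric])
  show ?thesis using main[of "Poly_Mapping.keys s" "Poly_Mapping.lookup s"] unfolding e
    using finite_keys by blast
qed

lemma p_deriv_exact: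
  assumes "prime p"
  shows "of_nat p * p_deriv p s = frob_lift p s - s^p"
proof -
  obtain h where h: "frob_lift p s - s^p = of_nat p * h" using frobenius_cong[OF assms] by blast
  have p0: "p > 0" using assms prime_gt_0_nat by blast
  have "p_deriv p s = h"
  proof (rule poly_mapping_eqI)
    fix m
    show "Poly_Mapping.lookup (p_deriv p s) m = Poly_Mapping.lookup h m"
      unfolding p_deriv_def h using p0 by (simp add: map.rep_eq lookup_of_nat_mult when_def)
  qed
  then show ?thesis using h by simp
qed

definition Eok :: "nat \<Rightarrow> nat \<Rightarrow> bool" where
  "Eok i j \<longleftrightarrow> i = 0 \<or> (i = 1 \<and> (j = 2 \<or> j = 3)) \<or> (i = 2 \<and> j = 3) \<or> (4 \<le> i \<and> even i \<and> j = Suc i)"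

definition tau1 :: "nat \<Rightarrow> nat" where "tau1 = id"
definition tau2 :: "nat \<Rightarrow> nat" where "tau2 = transpose 1 2"
definition tau3 :: "nat \<Rightarrow> nat" where "tau3 = transpose 2 3 \<circ> transpose 1 2"

lemma tau_vals:
  "tau1 x = x"
  "tau2 0 = 0" "tau2 1 = 2" "tau2 2 = 1" "tau2 3 = 3" "x \<ge> 3 \<Longrightarrow> tau2 x = x"
  "tau2 (Suc 0) = 2" "tau3 (Suc 0) = 3"
  "tau3 0 = 0" "tau3 1 = 3" "tau3 2 = 1" "tau3 3 = 2" "x \<ge> 4 \<Longrightarrow> tau3 x = x"
  by (auto simp: tau1_def tau2_def tau3_def transpose_def)

lemma pp_perm: "\<sigma> \<in> pfaff_perms n \<Longrightarrow> \<sigma> permutes {..<n}"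
  by (simp add: pfaff_perms_def)

lemma pp_lt: "\<sigma> \<in> pfaff_perms n \<Longrightarrow> k < n div 2 \<Longrightarrow> \<sigma> (2*k) < \<sigma> (2*k+1)"
  by (simp add: pfaff_perms_def)

lemma pp_step: "\<sigma> \<in> pfaff_perms n \<Longrightarrow> k + 1 < n div 2 \<Longrightarrow> \<sigma> (2*k) < \<sigma> (2*k+2)"
  by (simp add: pfaff_perms_def)

lemma pp_chain:
  assumes "\<sigma> \<in> pfaff_perms n" "k \<le> k'" "k' < n div 2"
  shows "\<sigma> (2*k) \<le> \<sigma> (2*k')"
  using assms(2,3)
proof (induction k' rule: dec_induct)
  case base then show ?case by simp
next
  case (step m)
  have "\<sigma> (2*m) < \<sigma> (2*m+2)" using pp_step[OF assms(1), of m] step by simp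
  then show ?case using step by (simp add: algebra_simps)
qed

lemma pp_lower:
  assumes "\<sigma> \<in> pfaff_perms n" "even n" "2*k \<le> j" "j < n"
  shows "\<sigma> (2*k) \<le> \<sigma> j"
proof -
  define k' where "k' = j div 2"
  have kk: "k \<le> k'" using assms(3) k'_def by simp
  have k'h: "k' < n div 2" using assms(2,4) k'_def by auto
  have c: "\<sigma> (2*k) \<le> \<sigma> (2*k')" using pp_chain[OF assms(1) kk k'h] .
  show ?thesis
  proof (cases "even j")
    case True
    then have "j = 2*k'" using k'_def by simp
    then show ?thesis using c by simp
  next
    case False
    then have "j = 2*k'+1" using k'_def by simp
    then show ?thesis using c pp_lt[OF assms(1) k'h] by simp
  qed
qed

lemma perm_surj_lt:
  assumes "\<sigma> permutes {..<n}" "v < n"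
  shows "\<exists>i<n. \<sigma> i = v"
proof -
  obtain i where i: "\<sigma> i = v" using permutes_surj[OF assms(1)] by (metis surj_def)
  have "i < n"
  proof (rule ccontr)
    assume "\<not> i < n"
    then have "\<sigma> i = i" using permutes_not_in[OF assms(1)] by simp
    then show False using i assms(2) \<open>\<not> i < n\<close> by simp
  qed
  then show ?thesis using i by blast
qed

lemma pp_inj: "\<sigma> \<in> pfaff_perms n \<Longrightarrow> \<sigma> i = \<sigma> j \<Longrightarrow> i = j"
  using pp_perm permutes_inj by (metis injD)

lemma pp_range: "\<sigma> \<in> pfaff_perms n \<Longrightarrow> i < n \<Longrightarrow> \<sigma> i < n"
  using pp_perm permutes_in_image by (metis lessThan_iff)

lemma pp_zero:
  assumes "\<sigma> \<in> pfaff_perms n" "even n" "n > 0"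
  shows "\<sigma> 0 = 0"
proof -
  obtain i where i: "i < n" "\<sigma> i = 0" using perm_surj_lt[OF pp_perm[OF assms(1)] assms(3)] by blast
  have "\<sigma> (2*0) \<le> \<sigma> i" using pp_lower[OF assms(1,2), of 0 i] i by simp
  then show ?thesis using i by simp
qed

lemma classify:
  assumes P: "\<sigma> \<in> pfaff_perms n" and ev: "even n" and n4: "n \<ge> 4"
    and E: "\<And>k. k < n div 2 \<Longrightarrow> Eok (\<sigma> (2*k)) (\<sigma> (2*k+1))"
  shows "\<sigma> = tau1 \<or> \<sigma> = tau2 \<or> \<sigma> = tau3"
proof -
  define h where "h = n div 2"
  have nh: "n = 2*h" using ev h_def by simp
  have h2: "h \<ge> 2" using n4 nh by simp
  have s0: "\<sigma> 0 = 0" using pp_zero[OF P ev] n4 by simp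
  have inj: "\<And>i j. \<sigma> i = \<sigma> j \<Longrightarrow> i = j" using pp_inj[OF P] by blast
  have perm: "\<sigma> permutes {..<n}" using pp_perm[OF P] .
  have low: "\<And>k j. 2*k \<le> j \<Longrightarrow> j < n \<Longrightarrow> \<sigma> (2*k) \<le> \<sigma> j" using pp_lower[OF P ev] by blast
  have Ek: "\<And>k. k < h \<Longrightarrow> Eok (\<sigma> (2*k)) (\<sigma> (2*k+1))" using E h_def by blast
  define a where "a = \<sigma> 1"
  have a0: "a \<noteq> 0" using inj[of 1 0] s0 a_def by auto
  have an: "a < n" using pp_range[OF P, of 1] n4 a_def by simp
  have first4: "(\<sigma> 1 = 1 \<and> \<sigma> 2 = 2 \<and> \<sigma> 3 = 3) \<or> (\<sigma> 1 = 2 \<and> \<sigma> 2 = 1 \<and> \<sigma> 3 = 3) \<or> (\<sigma> 1 = 3 \<and> \<sigma> 2 = 1 \<and> \<sigma> 3 = 2)"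
  proof (cases "a = 1")
    case True
    obtain i where i: "i < n" "\<sigma> i = 2" using perm_surj_lt[OF perm, of 2] n4 by auto
    have i0: "i \<noteq> 0" using i(2) s0 by (metis zero_neq_numeral)
    have i1: "i \<noteq> 1" using i s0 True a_def by (metis numeral_eq_one_iff semiring_norm(85))
    from i0 i1 have "\<sigma> 2 \<le> 2" using low[of 1 i] i by simp
    moreover have "\<sigma> 2 \<noteq> 0" "\<sigma> 2 \<noteq> 1" using inj[of 2 0] inj[of 2 1] s0 True a_def by auto
    ultimately have s2: "\<sigma> 2 = 2" by simp
    have "Eok (\<sigma> 2) (\<sigma> 3)" using Ek[of 1] h2 by simp
    then have "\<sigma> 3 = 3" using s2 by (simp add: Eok_def)
    then show ?thesis using s2 True a_def by simp
  next
    case False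
    obtain i where i: "i < n" "\<sigma> i = 1" using perm_surj_lt[OF perm, of 1] n4 by auto
    have i0: "i \<noteq> 0" using i(2) s0 by (metis zero_neq_one)
    have i1: "i \<noteq> 1" using i s0 False a_def by metis
    from i0 i1 have "\<sigma> 2 \<le> 1" using low[of 1 i] i by simp
    moreover have "\<sigma> 2 \<noteq> 0" using inj[of 2 0] s0 by auto
    ultimately have s2: "\<sigma> 2 = 1" by simp
    have "Eok (\<sigma> 2) (\<sigma> 3)" using Ek[of 1] h2 by simp
    then have s3: "\<sigma> 3 = 2 \<or> \<sigma> 3 = 3" using s2 by (simp add: Eok_def)
    have s3a: "\<sigma> 3 \<noteq> a" using inj[of 3 1] a_def by auto
    show ?thesis
    proof (cases "a \<le> 3")
      case True
      then have "a = 2 \<or> a = 3" using a0 False by auto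
      then show ?thesis using s2 s3 s3a a_def by auto
    next
      case a4: False
      have n6: "n \<ge> 6" using a4 an ev by presburger
      then have h3: "h \<ge> 3" using nh by simp
      define r where "r = 5 - \<sigma> 3"
      have r: "r = 2 \<or> r = 3" "r \<noteq> \<sigma> 3" using s3 r_def by auto
      obtain j where j: "j < n" "\<sigma> j = r" using perm_surj_lt[OF perm, of r] n4 r by auto
      have "\<sigma> j \<noteq> 0" using j r by auto
      then have j0: "j \<noteq> 0" using s0 by metis
      have "j \<noteq> 1" "j \<noteq> 2" "j \<noteq> 3" using j s0 a4 a_def s2 r by auto
      with j0 have "\<sigma> 4 \<le> r" using low[of 2 j] j by simp
      moreover have "\<sigma> 4 \<noteq> 0" "\<sigma> 4 \<noteq> 1" "\<sigma> 4 \<noteq> \<sigma> 3" using inj[of 4 0] inj[of 4 2] inj[of 4 3] s0 s2 by auto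
      ultimately have s4: "\<sigma> 4 = r" using r s3 by auto
      have "Eok (\<sigma> (2*2)) (\<sigma> (2*2+1))" using Ek[of 2] h3 by simp
      then have "Eok r (\<sigma> 5)" using s4 by simp
      then have "r = 2 \<and> \<sigma> 5 = 3" using r by (auto simp: Eok_def)
      then have "\<sigma> 5 = \<sigma> 3" using r s3 by auto
      then show ?thesis using inj[of 5 3] by simp
    qed
  qed
  have vals: "\<And>v. v < 4 \<Longrightarrow> \<exists>i<4. \<sigma> i = v"
  proof -
    fix v :: nat assume "v < 4"
    then have "v = 0 \<or> v = 1 \<or> v = 2 \<or> v = 3" by auto
    then show "\<exists>i<4. \<sigma> i = v" using first4 s0
      by (elim disjE) (metis zero_less_numeral one_less_numeral_iff semiring_norm(76) numeral_less_iff semiring_norm(68) less_numeral_extra(1) rel_simps(46) | force)+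
  qed
  have first_small: "\<And>i. i < 4 \<Longrightarrow> \<sigma> i < 4"
  proof -
    fix i :: nat assume "i < 4"
    then have "i = 0 \<or> i = 1 \<or> i = 2 \<or> i = 3" by auto
    then show "\<sigma> i < 4" using first4 s0 by auto
  qed
  have rest: "\<forall>i. 4 \<le> i \<and> i < 2*(k+2) \<longrightarrow> \<sigma> i = i" if "k + 2 \<le> h" for k
    using that
  proof (induction k)
    case 0 then show ?case by simp
  next
    case (Suc k)
    define K where "K = k + 2"
    have Kh: "K < h" using Suc.prems K_def by simp
    have IH: "\<And>i. 4 \<le> i \<Longrightarrow> i < 2*K \<Longrightarrow> \<sigma> i = i" using Suc K_def by simp
    have K2: "K \<ge> 2" using K_def by simp
    obtain j where j: "j < n" "\<sigma> j = 2*K" using perm_surj_lt[OF perm, of "2*K"] Kh nh by auto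
    have "j \<ge> 2*K"
    proof (rule ccontr)
      assume "\<not> j \<ge> 2*K"
      then have "j < 2*K" by simp
      show False
      proof (cases "j < 4")
        case True then show False using first_small[of j] j K2 by simp
      next
        case False then show False using IH[of j] j \<open>j < 2*K\<close> by simp
      qed
    qed
    then have le: "\<sigma> (2*K) \<le> 2*K" using low[of K j] j by simp
    have ge: "\<sigma> (2*K) \<ge> 2*K"
    proof (rule ccontr)
      assume "\<not> \<sigma> (2*K) \<ge> 2*K"
      then have v: "\<sigma> (2*K) < 2*K" by simp
      show False
      proof (cases "\<sigma> (2*K) < 4")
        case True
        then obtain i where "i < 4" "\<sigma> i = \<sigma> (2*K)" using vals by blast
        then show False using inj K2 by fastforce
      next
        case False
        then have "\<sigma> (\<sigma> (2*K)) = \<sigma> (2*K)" using IH v by simp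
        then have "\<sigma> (2*K) = 2*K" using inj by blast
        then show False using v by simp
      qed
    qed
    have e2: "\<sigma> (2*K) = 2*K" using le ge by simp
    have "Eok (\<sigma> (2*K)) (\<sigma> (2*K+1))" using Ek Kh by blast
    then have e3: "\<sigma> (2*K+1) = 2*K+1" using e2 K2 by (auto simp: Eok_def)
    show ?case
    proof (intro allI impI)
      fix i assume "4 \<le> i \<and> i < 2 * (Suc k + 2)"
      then have "4 \<le> i" "i < 2*K + 2" using K_def by auto
      then consider "i < 2*K" | "i = 2*K" | "i = 2*K+1" by linarith
      then show "\<sigma> i = i" using IH e2 e3 \<open>4 \<le> i\<close> by cases auto
    qed
  qed
  have big: "\<And>i. 4 \<le> i \<Longrightarrow> i < n \<Longrightarrow> \<sigma> i = i"
    using rest[of "h - 2"] h2 nh by simp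
  have outside: "\<And>i. i \<ge> n \<Longrightarrow> \<sigma> i = i" using permutes_not_in[OF perm] by simp
  have ident: "\<And>i. i \<ge> 4 \<Longrightarrow> \<sigma> i = i" using big outside by (meson not_le)
  have eqon: "\<sigma> = \<tau>" if "\<sigma> 1 = \<tau> 1" "\<sigma> 2 = \<tau> 2" "\<sigma> 3 = \<tau> 3" "\<tau> 0 = 0" "\<And>i. i \<ge> 4 \<Longrightarrow> \<tau> i = i" for \<tau>
  proof
 fix x :: nat
    consider "x = 0" | "x = 1" | "x = 2" | "x = 3" | "x \<ge> 4" by linarith
    then show "\<sigma> x = \<tau> x" using that s0 ident by cases auto
  qed
  show ?thesis using first4
  proof (elim disjE)
    assume "\<sigma> 1 = 1 \<and> \<sigma> 2 = 2 \<and> \<sigma> 3 = 3"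
    then show ?thesis using eqon[of tau1] tau_vals by auto
  next
    assume "\<sigma> 1 = 2 \<and> \<sigma> 2 = 1 \<and> \<sigma> 3 = 3"
    then show ?thesis using eqon[of tau2] tau_vals by auto
  next
    assume "\<sigma> 1 = 3 \<and> \<sigma> 2 = 1 \<and> \<sigma> 3 = 2"
    then show ?thesis using eqon[of tau3] tau_vals by auto
  qed
qed

definition monoS :: "nat \<Rightarrow> (nat \<Rightarrow> nat) \<Rightarrow> mono" where
  "monoS n \<sigma> = (\<Sum>k<n div 2. Poly_Mapping.single (\<sigma> (2*k), \<sigma> (2*k+1)) 1)"

lemma prod_single_int: "finite K \<Longrightarrow> (\<Prod>k\<in>K. Poly_Mapping.single (f k) (1::int)) = Poly_Mapping.single (\<Sum>k\<in>K. f k) 1"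
  by (induction K rule: finite_induct) (simp_all add: mult_single)

lemma pfX_expand: "pfX n = (\<Sum>\<sigma>\<in>pfaff_perms n. Poly_Mapping.single (monoS n \<sigma>) (sign \<sigma>))"
  unfolding pfX_def
proof (rule sum.cong)
  fix \<sigma> assume "\<sigma> \<in> pfaff_perms n"
  have "(\<Prod>k<n div 2. Xvar (\<sigma> (2 * k)) (\<sigma> (2 * k + 1))) = Poly_Mapping.single (monoS n \<sigma>) 1"
    unfolding Xvar_def monoS_def by (simp add: prod_single_int)
  moreover have "(of_int (sign \<sigma>) :: zpoly) = Poly_Mapping.single 0 (sign \<sigma>)"
    by (simp flip: single_of_int)
  ultimately show "of_int (sign \<sigma>) * (\<Prod>k<n div 2. Xvar (\<sigma> (2 * k)) (\<sigma> (2 * k + 1))) = Poly_Mapping.single (monoS n \<sigma>) (sign \<sigma>)"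
    by (simp add: mult_single)
qed simp

definition Mf :: "nat \<Rightarrow> nat \<Rightarrow> nat \<Rightarrow> nat \<Rightarrow> nat \<Rightarrow> nat \<times> nat \<Rightarrow> nat" where
  "Mf n t a b c x = (case x of (i,j) \<Rightarrow>
     if i = 0 \<and> 1 \<le> j \<and> j < n then t + (if j = 1 then a else 0) + (if j = 2 then b else 0) + (if j = 3 then c else 0)
     else if i = 2 \<and> j = 3 then a else if i = 1 \<and> j = 3 then b else if i = 1 \<and> j = 2 then c
     else if 4 \<le> i \<and> even i \<and> j = Suc i \<and> j < n then a + b + c else 0)"

definition Mon :: "nat \<Rightarrow> nat \<Rightarrow> nat \<Rightarrow> nat \<Rightarrow> nat \<Rightarrow> mono" where
  "Mon n t a b c = Abs_poly_mapping (Mf n t a b c)"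

lemma Mf_finite: "finite {x. Mf n t a b c x \<noteq> 0}"
proof (rule finite_subset)
  show "{x. Mf n t a b c x \<noteq> 0} \<subseteq> {..n+3} \<times> {..n+3}"
    by (auto simp: Mf_def split: if_splits)
qed simp

lemma lookup_Mon: "Poly_Mapping.lookup (Mon n t a b c) x = Mf n t a b c x"
  unfolding Mon_def using Mf_finite by simp

lemma Mon_split_t: "Mon n t a b c = Mon n 0 a b c + Mon n t 0 0 0"
  by (rule poly_mapping_eqI) (auto simp: lookup_add lookup_Mon Mf_def split: prod.split)

lemma Mon_Suc_a: "Mon n t (Suc a) b c = Mon n t a b c + Mon n 0 1 0 0"
  by (rule poly_mapping_eqI) (auto simp: lookup_add lookup_Mon Mf_def split: prod.split)

lemma Mon_Suc_b: "Mon n t a (Suc b) c = Mon n t a b c + Mon n 0 0 1 0"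
  by (rule poly_mapping_eqI) (auto simp: lookup_add lookup_Mon Mf_def split: prod.split)

lemma Mon_Suc_c: "Mon n t a b (Suc c) = Mon n t a b c + Mon n 0 0 0 1"
  by (rule poly_mapping_eqI) (auto simp: lookup_add lookup_Mon Mf_def split: prod.split)

lemma Mon_E: "Poly_Mapping.lookup (Mon n t a b c) (i,j) \<noteq> 0 \<Longrightarrow> Eok i j"
  by (auto simp: lookup_Mon Mf_def Eok_def split: if_splits)

lemma scal_Mon_b: "scal p (Mon n 0 0 1 0) = Mon n 0 0 p 0"
  by (rule poly_mapping_eqI) (auto simp: lookup_Mon Mf_def split: prod.split)

lemma scal_Mon_t: "scal t (Mon n 1 0 0 0) = Mon n t 0 0 0"
  by (rule poly_mapping_eqI) (auto simp: lookup_Mon Mf_def split: prod.split)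

lemma lookup_monoS: "Poly_Mapping.lookup (monoS n \<sigma>) x = (\<Sum>k<n div 2. (if (\<sigma> (2*k), \<sigma> (2*k+1)) = x then 1 else 0))"
  unfolding monoS_def lookup_sum by (auto simp: lookup_single when_def intro!: sum.cong)

lemma sum_tail_pairs:
  assumes "n = 2*h"
  shows "(\<Sum>k\<in>{2..<h}. (if (2*k, 2*k+1) = (i,j) then 1 else (0::nat))) = (if 4 \<le> i \<and> even i \<and> j = Suc i \<and> j < n then 1 else 0)"
proof -
  have "(\<Sum>k\<in>{2..<h}. (if (2*k, 2*k+1) = (i,j) then 1 else (0::nat))) = (\<Sum>k\<in>{2..<h}. (if k = i div 2 then (if even i \<and> j = Suc i then 1 else 0) else 0))"
    by (rule sum.cong) auto
  also have "\<dots> = (if i div 2 \<in> {2..<h} then (if even i \<and> j = Suc i then 1 else 0) else 0)"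
    by (rule sum.delta) simp
  also have "\<dots> = (if 4 \<le> i \<and> even i \<and> j = Suc i \<and> j < n then 1 else 0)"
    using assms by auto
  finally show ?thesis .
qed

lemma lookup_monoS_tau:
  assumes "\<And>x. x \<ge> 4 \<Longrightarrow> \<tau> x = x" "n = 2*h" "h \<ge> 2"
  shows "Poly_Mapping.lookup (monoS n \<tau>) (i,j) = (if (\<tau> 0, \<tau> 1) = (i,j) then 1 else 0) + (if (\<tau> 2, \<tau> 3) = (i,j) then 1 else 0)
     + (if 4 \<le> i \<and> even i \<and> j = Suc i \<and> j < n then 1 else 0)"
proof -
  have hd: "n div 2 = h" using assms by simp
  have set: "{..<h} = insert 0 (insert 1 {2..<h})" using assms(3) by auto
  have "(\<Sum>k\<in>{2..<h}. (if (\<tau> (2*k), \<tau> (2*k+1)) = (i,j) then 1 else (0::nat))) = (\<Sum>k\<in>{2..<h}. (if (2*k, 2*k+1) = (i,j) then 1 else (0::nat)))"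
    by (rule sum.cong) (auto simp: assms(1))
  then show ?thesis unfolding lookup_monoS hd set using sum_tail_pairs[OF assms(2)] by simp
qed

lemma monoS_taus:
  assumes "even n" "n \<ge> 4"
  shows "monoS n tau1 = Mon n 0 1 0 0" "monoS n tau2 = Mon n 0 0 1 0" "monoS n tau3 = Mon n 0 0 0 1"
proof -
  obtain h where nh: "n = 2*h" using assms by blast
  have h2: "h \<ge> 2" using nh assms by simp
  have t1: "\<And>x. x \<ge> 4 \<Longrightarrow> tau1 x = x" and t2: "\<And>x. x \<ge> 4 \<Longrightarrow> tau2 x = x" and t3: "\<And>x. x \<ge> 4 \<Longrightarrow> tau3 x = x"
    using tau_vals by auto
  show "monoS n tau1 = Mon n 0 1 0 0"
    by (rule poly_mapping_eqI, case_tac k)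
       (use assms in \<open>auto simp: lookup_monoS_tau[OF t1 nh h2] lookup_Mon Mf_def tau_vals\<close>)
  show "monoS n tau2 = Mon n 0 0 1 0"
    by (rule poly_mapping_eqI, case_tac k)
       (use assms in \<open>auto simp: lookup_monoS_tau[OF t2 nh h2] lookup_Mon Mf_def tau_vals\<close>)
  show "monoS n tau3 = Mon n 0 0 0 1"
    by (rule poly_mapping_eqI, case_tac k)
       (use assms in \<open>auto simp: lookup_monoS_tau[OF t3 nh h2] lookup_Mon Mf_def tau_vals\<close>)
qed

lemma pp_intro:
  assumes "\<sigma> permutes {..<n}" "\<sigma> 0 = 0" "0 < \<sigma> 1" "\<sigma> 2 < \<sigma> 3" "0 < \<sigma> 2" "\<sigma> 2 < 4"
    "\<And>x. x \<ge> 4 \<Longrightarrow> \<sigma> x = x" "n \<ge> 4"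
  shows "\<sigma> \<in> pfaff_perms n"
  unfolding pfaff_perms_def
proof (intro CollectI conjI allI impI)
  show "\<sigma> permutes {..<n}" by fact
next
  fix k assume "k < n div 2"
  consider "k = 0" | "k = 1" | "k \<ge> 2" by linarith
  then show "\<sigma> (2*k) < \<sigma> (2*k+1)" using assms by cases auto
next
  fix k assume "k + 1 < n div 2"
  consider "k = 0" | "k = 1" | "k \<ge> 2" by linarith
  then show "\<sigma> (2*k) < \<sigma> (2*k+2)" using assms by cases (auto simp: numeral_eq_Suc)
qed

lemma taus_in:
  assumes "n \<ge> 4"
  shows "tau1 \<in> pfaff_perms n" "tau2 \<in> pfaff_perms n" "tau3 \<in> pfaff_perms n"
proof -
  have p2: "tau2 permutes {..<n}" unfolding tau2_def using assms by (intro permutes_swap_id) auto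
  have p3: "tau3 permutes {..<n}" unfolding tau3_def using assms
    by (intro permutes_compose permutes_swap_id) auto
  show "tau1 \<in> pfaff_perms n" using assms by (intro pp_intro) (auto simp: tau1_def permutes_id)
  show "tau2 \<in> pfaff_perms n" using assms p2 by (intro pp_intro) (auto simp: tau_vals)
  show "tau3 \<in> pfaff_perms n" using assms p3 by (intro pp_intro) (auto simp: tau_vals)
qed

lemma taus_sign: "sign tau1 = 1" "sign tau2 = -1" "sign tau3 = 1"
  by (simp_all add: tau1_def tau2_def tau3_def sign_swap_id sign_compose permutation_swap_id)

lemma taus_distinct: "tau1 \<noteq> tau2" "tau1 \<noteq> tau3" "tau2 \<noteq> tau3"
proof -
  show "tau1 \<noteq> tau2" proof assume "tau1 = tau2" then have "tau1 1 = tau2 1" by simp then show False by (simp add: tau_vals) qed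
  show "tau1 \<noteq> tau3" proof assume "tau1 = tau3" then have "tau1 1 = tau3 1" by simp then show False by (simp add: tau_vals) qed
  show "tau2 \<noteq> tau3" proof assume "tau2 = tau3" then have "tau2 1 = tau3 1" by simp then show False by (simp add: tau_vals) qed
qed

definition lam :: "nat \<Rightarrow> nat \<Rightarrow> nat \<Rightarrow> zpoly \<Rightarrow> int" where
  "lam n p t G = (\<Sum>b<Suc p. int b * Poly_Mapping.lookup G (Mon n t 0 b (p - b)))
                + (\<Sum>b<p. Poly_Mapping.lookup G (Mon n t 1 b (p - 1 - b)))"

lemma lam_add: "lam n p t (G + H) = lam n p t G + lam n p t H"
  unfolding lam_def by (simp add: lookup_add sum.distrib algebra_simps)

lemma lam_zero: "lam n p t 0 = 0"
  unfolding lam_def by simp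

lemma lam_sum: "finite A \<Longrightarrow> lam n p t (\<Sum>a\<in>A. f a) = (\<Sum>a\<in>A. lam n p t (f a))"
  by (induction A rule: finite_induct) (simp_all add: lam_zero lam_add)

lemma lam_ofnat: "lam n p t (of_nat q * G) = int q * lam n p t G"
  unfolding lam_def lookup_of_nat_mult by (simp add: sum_distrib_left distrib_left mult.left_commute)

lemma shiftA:
  fixes F :: zpoly
  shows "Poly_Mapping.lookup (F * Poly_Mapping.single (Mon n 0 1 0 0) s) (Mon n t a b c)
   = (if a = 0 then 0 else Poly_Mapping.lookup F (Mon n t (a - 1) b c) * s)"
proof (cases a)
  case 0
  have nz: "Mon n t 0 b c \<noteq> l + Mon n 0 1 0 0" for l
  proof
    assume "Mon n t 0 b c = l + Mon n 0 1 0 0"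
    then have "Poly_Mapping.lookup (Mon n t 0 b c) (2,3) = Poly_Mapping.lookup (l + Mon n 0 1 0 0) (2,3)" by simp
    then show False by (simp add: lookup_add lookup_Mon Mf_def)
  qed
  have z: "Poly_Mapping.lookup (F * Poly_Mapping.single (Mon n 0 1 0 0) s) (Mon n t 0 b c) = 0"
    by (rule lookup_mult_single_zero) (rule nz)
  show ?thesis using 0 z by simp
next
  case (Suc a')
  have e: "Mon n t a b c = Mon n t a' b c + Mon n 0 1 0 0" unfolding Suc by (rule Mon_Suc_a)
  show ?thesis unfolding e using Suc by (simp add: lookup_mult_single_shift)
qed

lemma shiftB:
  fixes F :: zpoly
  shows "Poly_Mapping.lookup (F * Poly_Mapping.single (Mon n 0 0 1 0) s) (Mon n t a b c)
   = (if b = 0 then 0 else Poly_Mapping.lookup F (Mon n t a (b - 1) c) * s)"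
proof (cases b)
  case 0
  have nz: "Mon n t a 0 c \<noteq> l + Mon n 0 0 1 0" for l
  proof
    assume "Mon n t a 0 c = l + Mon n 0 0 1 0"
    then have "Poly_Mapping.lookup (Mon n t a 0 c) (1,3) = Poly_Mapping.lookup (l + Mon n 0 0 1 0) (1,3)" by simp
    then show False by (simp add: lookup_add lookup_Mon Mf_def)
  qed
  have z: "Poly_Mapping.lookup (F * Poly_Mapping.single (Mon n 0 0 1 0) s) (Mon n t a 0 c) = 0"
    by (rule lookup_mult_single_zero) (rule nz)
  show ?thesis using 0 z by simp
next
  case (Suc b')
  have e: "Mon n t a b c = Mon n t a b' c + Mon n 0 0 1 0" unfolding Suc by (rule Mon_Suc_b)
  show ?thesis unfolding e using Suc by (simp add: lookup_mult_single_shift)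
qed

lemma shiftC:
  fixes F :: zpoly
  shows "Poly_Mapping.lookup (F * Poly_Mapping.single (Mon n 0 0 0 1) s) (Mon n t a b c)
   = (if c = 0 then 0 else Poly_Mapping.lookup F (Mon n t a b (c - 1)) * s)"
proof (cases c)
  case 0
  have nz: "Mon n t a b 0 \<noteq> l + Mon n 0 0 0 1" for l
  proof
    assume "Mon n t a b 0 = l + Mon n 0 0 0 1"
    then have "Poly_Mapping.lookup (Mon n t a b 0) (1,2) = Poly_Mapping.lookup (l + Mon n 0 0 0 1) (1,2)" by simp
    then show False by (simp add: lookup_add lookup_Mon Mf_def)
  qed
  have z: "Poly_Mapping.lookup (F * Poly_Mapping.single (Mon n 0 0 0 1) s) (Mon n t a b 0) = 0"
    by (rule lookup_mult_single_zero) (rule nz)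
  show ?thesis using 0 z by simp
next
  case (Suc c')
  have e: "Mon n t a b c = Mon n t a b c' + Mon n 0 0 0 1" unfolding Suc by (rule Mon_Suc_c)
  show ?thesis unfolding e using Suc by (simp add: lookup_mult_single_shift)
qed

lemma lam_A1:
  fixes F :: zpoly
  shows "lam n (Suc q) t (F * Poly_Mapping.single (Mon n 0 1 0 0) s)
   = (\<Sum>b<Suc q. Poly_Mapping.lookup F (Mon n t 0 b (q - b)) * s)"
  unfolding lam_def shiftA by simp

lemma lam_A2:
  fixes F :: zpoly
  shows "lam n (Suc q) t (F * Poly_Mapping.single (Mon n 0 0 1 0) s)
   = (\<Sum>b<Suc q. int (Suc b) * (Poly_Mapping.lookup F (Mon n t 0 b (q - b)) * s))
     + (\<Sum>b<q. Poly_Mapping.lookup F (Mon n t 1 b (q - Suc b)) * s)"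
proof -
  have e1: "(\<Sum>b<Suc (Suc q). int b * (if b = 0 then 0 else Poly_Mapping.lookup F (Mon n t 0 (b - 1) (Suc q - b)) * s))
     = (\<Sum>b<Suc q. int (Suc b) * (Poly_Mapping.lookup F (Mon n t 0 b (q - b)) * s))"
    by (simp only: sum.lessThan_Suc_shift) simp
  have e2: "(\<Sum>b<Suc q. (if b = 0 then 0 else Poly_Mapping.lookup F (Mon n t 1 (b - 1) (Suc q - 1 - b)) * s))
     = (\<Sum>b<q. Poly_Mapping.lookup F (Mon n t 1 b (q - Suc b)) * s)"
    by (simp only: sum.lessThan_Suc_shift) simp
  show ?thesis unfolding lam_def shiftB e1 e2 ..
qed

lemma lam_A3:
  fixes F :: zpoly
  shows "lam n (Suc q) t (F * Poly_Mapping.single (Mon n 0 0 0 1) s)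
   = (\<Sum>b<Suc q. int b * (Poly_Mapping.lookup F (Mon n t 0 b (q - b)) * s))
     + (\<Sum>b<q. Poly_Mapping.lookup F (Mon n t 1 b (q - Suc b)) * s)"
proof -
  have e1: "(\<Sum>b<Suc (Suc q). int b * (if Suc q - b = 0 then 0 else Poly_Mapping.lookup F (Mon n t 0 b (Suc q - b - 1)) * s))
     = (\<Sum>b<Suc q. int b * (Poly_Mapping.lookup F (Mon n t 0 b (q - b)) * s))"
    by (simp only: sum.lessThan_Suc) (auto intro!: sum.cong simp: Suc_diff_le)
  have e2: "(\<Sum>b<Suc q. (if Suc q - 1 - b = 0 then 0 else Poly_Mapping.lookup F (Mon n t 1 b (Suc q - 1 - b - 1)) * s))
     = (\<Sum>b<q. Poly_Mapping.lookup F (Mon n t 1 b (q - Suc b)) * s)"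
    by (simp only: sum.lessThan_Suc) (auto intro!: sum.cong simp: Suc_diff_le)
  show ?thesis unfolding lam_def shiftC e1 e2 ..
qed

lemma lam_taus:
  fixes F :: zpoly
  shows "lam n (Suc q) t (F * Poly_Mapping.single (Mon n 0 1 0 0) 1) + lam n (Suc q) t (F * Poly_Mapping.single (Mon n 0 0 1 0) (-1))
    + lam n (Suc q) t (F * Poly_Mapping.single (Mon n 0 0 0 1) 1) = 0"
proof -
  define g where "g b = Poly_Mapping.lookup F (Mon n t 0 b (q - b))" for b
  define h where "h b = Poly_Mapping.lookup F (Mon n t 1 b (q - Suc b))" for b
  have s1: "(\<Sum>b<Suc q. int (Suc b) * (g b * -1)) = (\<Sum>b<Suc q. (- g b - int b * g b))"
    by (rule sum.cong) (simp_all add: algebra_simps)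
  have s2: "(\<Sum>b<Suc q. (- g b - int b * g b)) = - (\<Sum>b<Suc q. g b) - (\<Sum>b<Suc q. int b * g b)"
    by (simp add: sum_subtractf sum_negf)
  have s3: "(\<Sum>b<q. h b * -1) = - (\<Sum>b<q. h b)" by (simp add: sum_negf)
  show ?thesis unfolding lam_A1 lam_A2 lam_A3 g_def[symmetric] h_def[symmetric]
    using s1 s2 s3 by simp
qed

lemma pp_finite: "finite (pfaff_perms n)"
  by (rule finite_subset[of _ "{\<sigma>. \<sigma> permutes {..<n}}"]) (auto simp: pfaff_perms_def finite_permutations)

lemma monoS_pair_ge: "k < n div 2 \<Longrightarrow> Poly_Mapping.lookup (monoS n \<sigma>) (\<sigma> (2*k), \<sigma> (2*k+1)) \<ge> 1"
proof -
  assume k: "k < n div 2"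
  have "(if (\<sigma> (2*k), \<sigma> (2*k+1)) = (\<sigma> (2*k), \<sigma> (2*k+1)) then 1 else 0) \<le> (\<Sum>k'<n div 2. (if (\<sigma> (2*k'), \<sigma> (2*k'+1)) = (\<sigma> (2*k), \<sigma> (2*k+1)) then 1 else (0::nat)))"
    by (rule member_le_sum[where f = "\<lambda>k'. (if (\<sigma> (2*k'), \<sigma> (2*k'+1)) = (\<sigma> (2*k), \<sigma> (2*k+1)) then 1 else (0::nat))"]) (use k in auto)
  then show ?thesis unfolding lookup_monoS by simp
qed

lemma monoS_le_E:
  assumes "\<sigma> \<in> pfaff_perms n" "even n" "n \<ge> 4"
    and sup: "\<And>k. k < n div 2 \<Longrightarrow> Poly_Mapping.lookup X (\<sigma> (2*k), \<sigma> (2*k+1)) \<ge> Poly_Mapping.lookup (monoS n \<sigma>) (\<sigma> (2*k), \<sigma> (2*k+1))"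
    and XE: "\<And>i j. Poly_Mapping.lookup X (i,j) \<noteq> 0 \<Longrightarrow> Eok i j"
  shows "\<sigma> = tau1 \<or> \<sigma> = tau2 \<or> \<sigma> = tau3"
proof (rule classify[OF assms(1-3)])
  fix k assume k: "k < n div 2"
  have "Poly_Mapping.lookup X (\<sigma> (2*k), \<sigma> (2*k+1)) \<ge> 1" using sup[OF k] monoS_pair_ge[OF k, of \<sigma>] by simp
  then show "Eok (\<sigma> (2*k)) (\<sigma> (2*k+1))" using XE by fastforce
qed

lemma lam_other:
  fixes F :: zpoly
  assumes "\<sigma> \<in> pfaff_perms n" "even n" "n \<ge> 4" "\<sigma> \<notin> {tau1, tau2, tau3}"
  shows "lam n p t (F * Poly_Mapping.single (monoS n \<sigma>) s) = 0"
proof -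
  have z: "Poly_Mapping.lookup (F * Poly_Mapping.single (monoS n \<sigma>) s) (Mon n t a b c) = 0" for a b c
  proof (rule lookup_mult_single_zero)
    fix l
    show "Mon n t a b c \<noteq> l + monoS n \<sigma>"
    proof
      assume eq: "Mon n t a b c = l + monoS n \<sigma>"
      have "\<sigma> = tau1 \<or> \<sigma> = tau2 \<or> \<sigma> = tau3"
      proof (rule monoS_le_E[OF assms(1-3), of "Mon n t a b c"])
        fix k assume "k < n div 2"
        show "Poly_Mapping.lookup (Mon n t a b c) (\<sigma> (2*k), \<sigma> (2*k+1)) \<ge> Poly_Mapping.lookup (monoS n \<sigma>) (\<sigma> (2*k), \<sigma> (2*k+1))"
          unfolding eq by (simp add: lookup_add)
      next
        fix i j show "Poly_Mapping.lookup (Mon n t a b c) (i,j) \<noteq> 0 \<Longrightarrow> Eok i j" by (rule Mon_E)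
      qed
      then show False using assms(4) by simp
    qed
  qed
  show ?thesis unfolding lam_def z by simp
qed

lemma lam_pf:
  fixes F :: zpoly
  assumes "even n" "n \<ge> 4" "p \<ge> 1"
  shows "lam n p t (F * pfX n) = 0"
proof -
  obtain q where q: "p = Suc q" using assms(3) by (cases p) auto
  define T where "T = {tau1, tau2, tau3}"
  have TP: "T \<subseteq> pfaff_perms n" using taus_in[OF assms(2)] T_def by auto
  have "F * pfX n = (\<Sum>\<sigma>\<in>pfaff_perms n. F * Poly_Mapping.single (monoS n \<sigma>) (sign \<sigma>))"
    unfolding pfX_expand by (simp add: sum_distrib_left)
  then have "lam n p t (F * pfX n) = (\<Sum>\<sigma>\<in>pfaff_perms n. lam n p t (F * Poly_Mapping.single (monoS n \<sigma>) (sign \<sigma>)))"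
    by (simp add: lam_sum pp_finite)
  also have "\<dots> = (\<Sum>\<sigma>\<in>pfaff_perms n - T. lam n p t (F * Poly_Mapping.single (monoS n \<sigma>) (sign \<sigma>)))
        + (\<Sum>\<sigma>\<in>T. lam n p t (F * Poly_Mapping.single (monoS n \<sigma>) (sign \<sigma>)))"
    by (rule sum.subset_diff[OF TP pp_finite])
  also have "(\<Sum>\<sigma>\<in>pfaff_perms n - T. lam n p t (F * Poly_Mapping.single (monoS n \<sigma>) (sign \<sigma>))) = 0"
    by (rule sum.neutral) (use assms T_def lam_other in auto)
  also have "(\<Sum>\<sigma>\<in>T. lam n p t (F * Poly_Mapping.single (monoS n \<sigma>) (sign \<sigma>)))
     = lam n p t (F * Poly_Mapping.single (Mon n 0 1 0 0) 1) + (lam n p t (F * Poly_Mapping.single (Mon n 0 0 1 0) (-1))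
       + lam n p t (F * Poly_Mapping.single (Mon n 0 0 0 1) 1))"
    unfolding T_def using taus_distinct monoS_taus[OF assms(1,2)] taus_sign by simp
  finally show ?thesis using lam_taus[of n q t F] q by (simp add: add.assoc)
qed

lemma lam_diff: "lam n p t (G - H) = lam n p t G - lam n p t H"
  using lam_add[of n p t "G - H" H] by simp

lemma lam_pmul: "lam n p t ((F::zpoly) * of_nat p) = int p * lam n p t F"
  by (simp add: mult.commute[of F] lam_ofnat)

lemma Xvar_pow: "Xvar i j ^ N = Poly_Mapping.single (scal N (Poly_Mapping.single (i,j) 1)) 1"
  unfolding Xvar_def single_pow by simp

lemma lam_ypow:
  fixes F :: zpoly
  assumes "1 \<le> j" "j < n" "p \<ge> 2"
  shows "int p dvd lam n p t (F * Xvar 0 j ^ (p + t))"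
proof -
  define Z where "Z = scal (p + t) (Poly_Mapping.single (0,j) 1)"
  have Zx: "Xvar 0 j ^ (p + t) = Poly_Mapping.single Z 1" unfolding Z_def Xvar_pow ..
  have key: "Poly_Mapping.lookup (F * Poly_Mapping.single Z 1) (Mon n t a b c) = 0"
    if "Poly_Mapping.lookup (Mon n t a b c) (0,j) < p + t" for a b c
  proof (rule lookup_mult_single_zero)
    fix l show "Mon n t a b c \<noteq> l + Z"
    proof
      assume "Mon n t a b c = l + Z"
      then have "Poly_Mapping.lookup (Mon n t a b c) (0,j) = Poly_Mapping.lookup l (0,j) + (p + t)"
        by (simp add: lookup_add Z_def)
      then show False using that by simp
    qed
  qed
  have ex: "Poly_Mapping.lookup (Mon n t a b c) (0,j) = t + (if j = 1 then a else 0) + (if j = 2 then b else 0) + (if j = 3 then c else 0)" for a b c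
    using assms by (simp add: lookup_Mon Mf_def)
  have d1: "int p dvd int b * Poly_Mapping.lookup (F * Poly_Mapping.single Z 1) (Mon n t 0 b (p - b))" if "b < Suc p" for b
  proof (cases "b = p \<or> b = 0")
    case True then show ?thesis by auto
  next
    case False
    then have "Poly_Mapping.lookup (Mon n t 0 b (p - b)) (0,j) < p + t" using that ex by auto
    then show ?thesis using key by simp
  qed
  have d2: "Poly_Mapping.lookup (F * Poly_Mapping.single Z 1) (Mon n t 1 b (p - 1 - b)) = 0" if "b < p" for b
    using key that ex assms(3) by simp
  show ?thesis unfolding Zx lam_def
    by (intro dvd_add dvd_sum) (use d1 d2 in auto)
qed

lemma prod_list_singles: "prod_list (map (\<lambda>j. Poly_Mapping.single (g j) (1::int)) xs) = Poly_Mapping.single (sum_list (map g xs)) 1"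
  by (induction xs) (simp_all add: mult_single)

lemma Y1: "sum_list (map (\<lambda>j. Poly_Mapping.single (0::nat, j) (1::nat)) [1..<n]) = Mon n 1 0 0 0"
proof -
  have "sum_list (map (\<lambda>j. Poly_Mapping.single (0::nat, j) (1::nat)) [1..<n]) = (\<Sum>j\<in>{1..<n}. Poly_Mapping.single (0, j) 1)"
    by (simp add: sum_list_distinct_conv_sum_set)
  also have "\<dots> = Mon n 1 0 0 0"
  proof (rule poly_mapping_eqI)
    fix x :: "nat \<times> nat"
    obtain i j where x: "x = (i,j)" by (cases x)
    have "(\<Sum>j'\<in>{1..<n}. Poly_Mapping.lookup (Poly_Mapping.single (0, j') (1::nat)) (i,j))
        = (\<Sum>j'\<in>{1..<n}. (if j' = j then (if i = 0 then 1 else 0) else 0))"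
      by (rule sum.cong) (auto simp: lookup_single when_def)
    also have "\<dots> = (if j \<in> {1..<n} then (if i = 0 then 1 else 0) else 0)" by simp
    finally show "Poly_Mapping.lookup (\<Sum>j\<in>{1..<n}. Poly_Mapping.single (0, j) 1) x = Poly_Mapping.lookup (Mon n 1 0 0 0) x"
      unfolding x lookup_sum lookup_Mon by (auto simp: Mf_def)
  qed
  finally show ?thesis .
qed

lemma prodY: "prod_list (map (\<lambda>j. Xvar 0 j) [1..<n]) ^ t = Poly_Mapping.single (Mon n t 0 0 0) 1"
proof -
  have e: "prod_list (map (\<lambda>j. Xvar 0 j) [1..<n]) = Poly_Mapping.single (Mon n 1 0 0 0) 1"
    unfolding Xvar_def prod_list_singles Y1 ..
  show ?thesis unfolding e single_pow scal_Mon_t by simp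
qed

lemma lam_Yt: "lam n p t (Poly_Mapping.single (Mon n t 0 0 0) 1 * G) = lam n p 0 G"
proof -
  have "Poly_Mapping.lookup (Poly_Mapping.single (Mon n t 0 0 0) 1 * G) (Mon n t a b c) = Poly_Mapping.lookup G (Mon n 0 a b c)" for a b c
    by (subst Mon_split_t) (simp add: mult.commute[of _ G] lookup_mult_single_shift)
  then show ?thesis unfolding lam_def by simp
qed

lemma frob_pf: "frob_lift p (pfX n) = (\<Sum>\<sigma>\<in>pfaff_perms n. Poly_Mapping.single (scal p (monoS n \<sigma>)) (sign \<sigma>))"
  unfolding pfX_expand by (simp add: frob_lift_sum pp_finite frob_lift_single)

lemma scal_inj: "p > 0 \<Longrightarrow> scal p x = scal p y \<Longrightarrow> x = y"
proof (rule poly_mapping_eqI)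
  fix k assume "p > 0" "scal p x = scal p y"
  then have "p * Poly_Mapping.lookup x k = p * Poly_Mapping.lookup y k" by (metis lookup_scal)
  then show "Poly_Mapping.lookup x k = Poly_Mapping.lookup y k" using \<open>p > 0\<close> by simp
qed

lemma monoS_eq_A2:
  assumes "\<sigma> \<in> pfaff_perms n" "even n" "n \<ge> 4"
  shows "monoS n \<sigma> = Mon n 0 0 1 0 \<longleftrightarrow> \<sigma> = tau2"
proof
  assume eq: "monoS n \<sigma> = Mon n 0 0 1 0"
  have "\<sigma> = tau1 \<or> \<sigma> = tau2 \<or> \<sigma> = tau3"
    by (rule monoS_le_E[OF assms, of "Mon n 0 0 1 0"]) (simp_all add: eq Mon_E)
  moreover have "Mon n 0 1 0 0 \<noteq> Mon n 0 0 1 0"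
  proof
    assume "Mon n 0 1 0 0 = Mon n 0 0 1 0"
    then have "Poly_Mapping.lookup (Mon n 0 1 0 0) (2,3) = Poly_Mapping.lookup (Mon n 0 0 1 0) (2,3)" by simp
    then show False by (simp add: lookup_Mon Mf_def)
  qed
  moreover have "Mon n 0 0 0 1 \<noteq> Mon n 0 0 1 0"
  proof
    assume "Mon n 0 0 0 1 = Mon n 0 0 1 0"
    then have "Poly_Mapping.lookup (Mon n 0 0 0 1) (1,2) = Poly_Mapping.lookup (Mon n 0 0 1 0) (1,2)" by simp
    then show False by (simp add: lookup_Mon Mf_def)
  qed
  ultimately show "\<sigma> = tau2" using eq monoS_taus[OF assms(2,3)] by auto
next
  assume "\<sigma> = tau2"
  then show "monoS n \<sigma> = Mon n 0 0 1 0" using monoS_taus[OF assms(2,3)] by simp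
qed

lemma lam0_frob_single:
  assumes "\<sigma> \<in> pfaff_perms n" "even n" "n \<ge> 4" "p \<ge> 2"
  shows "lam n p 0 (Poly_Mapping.single (scal p (monoS n \<sigma>)) s) = (if \<sigma> = tau2 then int p * s else 0)"
proof -
  define x where "x = monoS n \<sigma>"
  have no1: "scal p x \<noteq> Mon n 0 1 b c" for b c
  proof
    assume "scal p x = Mon n 0 1 b c"
    then have "Poly_Mapping.lookup (scal p x) (2,3) = Poly_Mapping.lookup (Mon n 0 1 b c) (2,3)" by simp
    then have "p * Poly_Mapping.lookup x (2,3) = 1" by (simp add: lookup_Mon Mf_def)
    then show False using assms(4) by simp
  qed
  have no0: "scal p x \<noteq> Mon n 0 0 b (p - b)" if "0 < b" "b < p" for b
  proof
    assume "scal p x = Mon n 0 0 b (p - b)"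
    then have "Poly_Mapping.lookup (scal p x) (1,3) = Poly_Mapping.lookup (Mon n 0 0 b (p - b)) (1,3)" by simp
    then have e: "p * Poly_Mapping.lookup x (1,3) = b" by (simp add: lookup_Mon Mf_def)
    show False
    proof (cases "Poly_Mapping.lookup x (1,3)")
      case 0 then show False using e that by simp
    next
      case (Suc m) then show False using e that by simp
    qed
  qed
  have top: "(scal p x = Mon n 0 0 p (p - p)) \<longleftrightarrow> \<sigma> = tau2"
  proof -
    have "Mon n 0 0 p (p - p) = scal p (Mon n 0 0 1 0)" by (simp only: diff_self_eq_0 scal_Mon_b)
    then have "(scal p x = Mon n 0 0 p (p - p)) \<longleftrightarrow> x = Mon n 0 0 1 0"
      using scal_inj[of p] assms(4) by auto
    then show ?thesis using monoS_eq_A2[OF assms(1-3)] x_def by simp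
  qed
  have s1: "(\<Sum>b<Suc p. int b * Poly_Mapping.lookup (Poly_Mapping.single (scal p x) s) (Mon n 0 0 b (p - b)))
      = (if \<sigma> = tau2 then int p * s else 0)"
  proof -
    have "(\<Sum>b<p. int b * Poly_Mapping.lookup (Poly_Mapping.single (scal p x) s) (Mon n 0 0 b (p - b))) = 0"
    proof (rule sum.neutral, intro ballI)
      fix b assume "b \<in> {..<p}"
      then show "int b * Poly_Mapping.lookup (Poly_Mapping.single (scal p x) s) (Mon n 0 0 b (p - b)) = 0"
        using no0[of b] by (cases "b = 0") (auto simp: lookup_single when_def)
    qed
    then show ?thesis using top by (simp add: lookup_single when_def)
  qed
  have s2: "(\<Sum>b<p. Poly_Mapping.lookup (Poly_Mapping.single (scal p x) s) (Mon n 0 1 b (p - 1 - b))) = 0"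
    using no1 by (simp add: lookup_single when_def)
  show ?thesis unfolding lam_def x_def[symmetric] s1 s2 by simp
qed

lemma lam0_frob:
  assumes "even n" "n \<ge> 4" "p \<ge> 2"
  shows "lam n p 0 (frob_lift p (pfX n)) = - int p"
proof -
  have "lam n p 0 (frob_lift p (pfX n)) = (\<Sum>\<sigma>\<in>pfaff_perms n. lam n p 0 (Poly_Mapping.single (scal p (monoS n \<sigma>)) (sign \<sigma>)))"
    unfolding frob_pf by (simp add: lam_sum pp_finite)
  also have "\<dots> = (\<Sum>\<sigma>\<in>pfaff_perms n. (if \<sigma> = tau2 then int p * sign \<sigma> else 0))"
    by (rule sum.cong) (simp_all add: lam0_frob_single assms)
  also have "\<dots> = int p * sign tau2" using taus_in[OF assms(2)] pp_finite by simp
  finally show ?thesis by (simp add: taus_sign)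
qed

lemma lam_phi:
  assumes "prime p" "even n" "n \<ge> 4"
  shows "lam n p t (prod_list (map (\<lambda>j. Xvar 0 j) [1..<n]) ^ t * p_deriv p (pfX n)) = -1"
proof -
  have p2: "p \<ge> 2" using prime_ge_2_nat assms(1) by blast
  have "int p * lam n p t (prod_list (map (\<lambda>j. Xvar 0 j) [1..<n]) ^ t * p_deriv p (pfX n))
      = lam n p 0 (of_nat p * p_deriv p (pfX n))"
    unfolding prodY lam_Yt lam_ofnat ..
  also have "\<dots> = lam n p 0 (frob_lift p (pfX n)) - lam n p 0 (pfX n ^ (p - 1) * pfX n)"
  proof -
    have "pfX n ^ p = pfX n ^ (p - 1) * pfX n" using p2 by (cases p) (simp_all add: power_Suc2)
    then show ?thesis unfolding p_deriv_exact[OF assms(1)] lam_diff by simp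
  qed
  also have "lam n p 0 (pfX n ^ (p - 1) * pfX n) = 0" using lam_pf assms p2 by simp
  also have "lam n p 0 (frob_lift p (pfX n)) = - int p" using lam0_frob assms p2 by simp
  finally have "int p * lam n p t (prod_list (map (\<lambda>j. Xvar 0 j) [1..<n]) ^ t * p_deriv p (pfX n)) = int p * (-1)" by simp
  then show ?thesis using p2 by (simp only: mult_cancel_left) simp
qed

lemma not_ideal:
  assumes "prime p" "even n" "n \<ge> 4" "\<forall>g\<in>set gs. \<forall>F. int p dvd lam n p t (F * g)"
  shows "\<not> in_ideal gs (prod_list (map (\<lambda>j. Xvar 0 j) [1..<n]) ^ t * p_deriv p (pfX n))"
proof
  assume "in_ideal gs (prod_list (map (\<lambda>j. Xvar 0 j) [1..<n]) ^ t * p_deriv p (pfX n))"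
  then obtain c where c: "prod_list (map (\<lambda>j. Xvar 0 j) [1..<n]) ^ t * p_deriv p (pfX n) = (\<Sum>i<length gs. c i * gs ! i)"
    unfolding in_ideal_def by blast
  have "int p dvd lam n p t (\<Sum>i<length gs. c i * gs ! i)"
    unfolding lam_sum[OF finite_lessThan] using assms(4) by (intro dvd_sum) auto
  then have "int p dvd -1" using c lam_phi[OF assms(1-3)] by metis
  then have "p = 1" by simp
  then show False using assms(1) by simp
qed

lemma gens_ok:
  assumes "prime p" "even n" "n \<ge> 4" "set rels \<subseteq> {pfX n, of_nat p}"
  shows "\<forall>g\<in>set (rels @ map (\<lambda>y. y ^ (p + t)) (map (\<lambda>j. Xvar 0 j) [1..<n])). \<forall>F. int p dvd lam n p t (F * g)"
proof (intro ballI allI)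
  fix g F assume g: "g \<in> set (rels @ map (\<lambda>y. y ^ (p + t)) (map (\<lambda>j. Xvar 0 j) [1..<n]))"
  have p2: "p \<ge> 2" using prime_ge_2_nat assms(1) by blast
  consider "g = pfX n" | "g = of_nat p" | j where "1 \<le> j" "j < n" "g = Xvar 0 j ^ (p + t)"
    using g assms(4) by auto
  then show "int p dvd lam n p t (F * g)"
  proof cases
    case 1 then show ?thesis using lam_pf[OF assms(2,3)] p2 by simp
  next
    case 2 then show ?thesis by (simp add: lam_pmul)
  next
    case 3 then show ?thesis using lam_ypow p2 by simp
  qed
qed

lemma scal_add: "scal p (a + b) = scal p a + scal p b"
  by (rule poly_mapping_eqI) (simp add: lookup_add algebra_simps)

lemma claim2:
  assumes "prime p" "even n" "n \<ge> 4"
  shows "cech_class_zero [pfX n] (map (\<lambda>j. Xvar 0 j) [1..<n]) (of_nat p * p_deriv p (pfX n)) p"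
proof -
  define ys where "ys = map (\<lambda>j. Xvar 0 j) [1..<n]"
  define P where "P = pfaff_perms n"
  define gs where "gs = [pfX n] @ map (\<lambda>y. y ^ (p + 0)) ys"
  define restS where "restS \<sigma> = (\<Sum>k\<in>{1..<n div 2}. Poly_Mapping.single (\<sigma> (2*k), \<sigma> (2*k+1)) (1::nat))" for \<sigma> :: "nat \<Rightarrow> nat"
  have p2: "p \<ge> 2" using prime_ge_2_nat assms(1) by blast
  have split: "monoS n \<sigma> = Poly_Mapping.single (0, \<sigma> 1) 1 + restS \<sigma>" if "\<sigma> \<in> P" for \<sigma>
  proof -
    have "{..<n div 2} = insert 0 {1..<n div 2}" using assms(3) by auto
    moreover have "\<sigma> 0 = 0" using pp_zero[of \<sigma> n] that assms P_def by simp
    ultimately show ?thesis unfolding monoS_def restS_def by simp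
  qed
  have trm: "Poly_Mapping.single (scal p (monoS n \<sigma>)) (sign \<sigma>) = Poly_Mapping.single (scal p (restS \<sigma>)) (sign \<sigma>) * Xvar 0 (\<sigma> 1) ^ p"
    if "\<sigma> \<in> P" for \<sigma>
    unfolding split[OF that] Xvar_pow mult_single scal_add by (simp add: add.commute)
  define c where "c i = (if i = 0 then - (pfX n ^ (p - 1)) else (\<Sum>\<sigma>\<in>{x. x \<in> P \<and> x 1 = i}. Poly_Mapping.single (scal p (restS \<sigma>)) (sign \<sigma>)))" for i
  have len: "length gs = n" unfolding gs_def ys_def using assms(3) by simp
  have g0: "gs ! 0 = pfX n" unfolding gs_def by simp
  have gi: "gs ! i = Xvar 0 i ^ p" if ii: "i \<in> {1..<n}" for i
  proof -
    obtain m where m: "i = Suc m" using ii by (cases i) auto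
    have "m < n - 1" using ii m by auto
    then show ?thesis unfolding gs_def ys_def m by (simp add: nth_append)
  qed
  have img: "(\<lambda>\<sigma>. \<sigma> 1) ` P \<subseteq> {1..<n}"
  proof
    fix v assume "v \<in> (\<lambda>\<sigma>. \<sigma> 1) ` P"
    then obtain \<sigma> where s: "\<sigma> \<in> P" "v = \<sigma> 1" by blast
    have "\<sigma> 0 = 0" using pp_zero[of \<sigma> n] s assms P_def by simp
    then have "\<sigma> 1 \<noteq> 0" using pp_inj[of \<sigma> n 1 0] s P_def by auto
    moreover have "\<sigma> 1 < n" using pp_range[of \<sigma> n 1] s P_def assms by simp
    ultimately show "v \<in> {1..<n}" using s by auto
  qed
  have "(\<Sum>i\<in>{1..<n}. c i * gs ! i) = (\<Sum>i\<in>{1..<n}. (\<Sum>\<sigma>\<in>{x. x \<in> P \<and> x 1 = i}. Poly_Mapping.single (scal p (monoS n \<sigma>)) (sign \<sigma>)))"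
  proof (rule sum.cong)
    fix i assume i: "i \<in> {1..<n}"
    have "c i * gs ! i = (\<Sum>\<sigma>\<in>{x. x \<in> P \<and> x 1 = i}. Poly_Mapping.single (scal p (restS \<sigma>)) (sign \<sigma>) * Xvar 0 i ^ p)"
      unfolding gi[OF i] c_def using i by (simp add: sum_distrib_right)
    also have "\<dots> = (\<Sum>\<sigma>\<in>{x. x \<in> P \<and> x 1 = i}. Poly_Mapping.single (scal p (monoS n \<sigma>)) (sign \<sigma>))"
      by (rule sum.cong) (auto simp: trm)
    finally show "c i * gs ! i = \<dots>" .
  qed simp
  also have "\<dots> = (\<Sum>\<sigma>\<in>P. Poly_Mapping.single (scal p (monoS n \<sigma>)) (sign \<sigma>))"
    by (rule sum.group) (use img pp_finite P_def in auto)
  also have "\<dots> = frob_lift p (pfX n)" unfolding frob_pf P_def ..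
  finally have rest: "(\<Sum>i\<in>{1..<n}. c i * gs ! i) = frob_lift p (pfX n)" .
  have "(\<Sum>i<length gs. c i * gs ! i) = c 0 * gs ! 0 + (\<Sum>i\<in>{1..<n}. c i * gs ! i)"
  proof -
    have "{..<length gs} = insert 0 {1..<n}" using len assms(3) by auto
    then show ?thesis by simp
  qed
  also have "\<dots> = frob_lift p (pfX n) - pfX n ^ p"
  proof -
    have "pfX n ^ (p - 1) * pfX n = pfX n ^ p" using p2 by (cases p) (simp_all add: power_Suc2)
    moreover have c0: "c 0 = - (pfX n ^ (p - 1))" by (simp add: c_def)
    ultimately show ?thesis unfolding rest g0 c0 by simp
  qed
  also have "\<dots> = prod_list ys ^ 0 * (of_nat p * p_deriv p (pfX n))"
    using p_deriv_exact[OF assms(1)] by simp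
  finally show ?thesis unfolding cech_class_zero_def in_ideal_def ys_def gs_def
    by (intro exI[of _ 0] exI[of _ c]) (simp add: ys_def)
qed

theorem theorem6p2:
  fixes n p :: nat
  assumes "even n" and "n \<ge> 4" and "prime p"
  defines "ys \<equiv> map (\<lambda>j. Xvar 0 j) [1..<n]"
  shows "\<not> cech_class_zero [pfX n] ys (p_deriv p (pfX n)) p
       \<and> cech_class_zero [pfX n] ys (of_nat p * p_deriv p (pfX n)) p
       \<and> \<not> cech_class_zero [pfX n, of_nat p] ys (p_deriv p (pfX n)) p
       \<and> (\<exists>f s. \<not> cech_class_zero [pfX n] ys f s
               \<and> cech_class_zero [pfX n] ys (of_nat p * f) s)"
proof -
  have nz: "\<not> cech_class_zero rels ys (p_deriv p (pfX n)) p" if "set rels \<subseteq> {pfX n, of_nat p}" for rels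
    unfolding cech_class_zero_def ys_def
    using not_ideal[OF assms(3,1,2) gens_ok[OF assms(3,1,2) that]] by blast
  have c1: "\<not> cech_class_zero [pfX n] ys (p_deriv p (pfX n)) p" by (rule nz) simp
  have c2: "cech_class_zero [pfX n] ys (of_nat p * p_deriv p (pfX n)) p"
    unfolding ys_def by (rule claim2[OF assms(3,1,2)])
  have c3: "\<not> cech_class_zero [pfX n, of_nat p] ys (p_deriv p (pfX n)) p" by (rule nz) simp
  show ?thesis using c1 c2 c3 by blast
qed

end
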